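(* In $V_q$, the element $\Omega=\sum_{n=0}^{r-2}(-1)^n\epsilon_{n+1}e_n^2$ satisfies $$\Omega=-P_{r-1}'(e_1)\,P_{r-2}(e_1)=-\iota\,P'_{r-1}(e_1),$$ where $\iota=e_{r-2}$. Moreover $\Omega=2\Omega^+$, where $\Omega^+=\sum_{n=0}^{(r-3)/2}\epsilon_{2n+1}e_{2n}^2\in V_q^+$.
   Context: Let $r\ge 3$ and $s$ be coprime odd integers with $0<s<r$, $q=\exp(i\pi s/r)$. For an integer $n$ put $[n]=\frac{q^n-q^{-n}}{q-q^{-1}}$, $[n]!=[n][n-1]\cdots[1]$, and for $1\le n\le r-1$ let $\epsilon_n=\operatorname{sign}[n]=(-1)^{\lfloor ns/r\rfloor}$ (so $\epsilon_1=1$ and $\epsilon_n=\epsilon_{r-n}$). A triple $(i,j,k)\in\{0,\dots,r-2\}^3$ is $r$-admissible if $i\le j+k$, $j\le i+k$, $k\le i+j$, $i+j+k$ is even and $i+j+k\le 2r-4$; for such a triple write $i=b+c$, $j=a+c$, $k=a+b$ and set $\langle i,j,k\rangle=(-1)^{a+b+c}\frac{[a+b+c+1]![a]![b]![c]!}{[a+b]![a+c]![b+c]!}$. Let $V_q$ be the $\mathbb{Q}$-vector space with basis $e_0,\dots,e_{r-2}$, with the symmetric bilinear form $\eta$ for which this basis is orthogonal and $\eta(e_i,e_i)=(-1)^i\epsilon_{i+1}$, and the symmetric trilinear form $\omega$ with $\omega(e_i,e_j,e_k)=\operatorname{sign}\langle i,j,k\rangle$ if $(i,j,k)$ is $r$-admissible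 and $0$ otherwise. The product on $V_q$ is defined by $\eta(x\cdot y,z)=\omega(x,y,z)$, giving a commutative associative unital algebra with unit $e_0$; $V_q^+$ is the subalgebra spanned by $e_0,e_2,\dots,e_{r-3}$. For a Frobenius algebra with orthogonal basis $(f_i)$ the element $\Omega$ is $\sum_i f_i^2/\eta(f_i,f_i)$; the displayed $\Omega,\Omega^+$ are these elements for $V_q$ and $V_q^+$. Define $P_n\in\mathbb{Z}[X]$ by $P_0=1$, $P_1=X$, $P_{n+1}=XP_n+\epsilon_n\epsilon_{n+1}P_{n-1}$ for $1\le n\le r-2$. *)

theory Defs
  imports Complex_Main "HOL-Computational_Algebra.Polynomial"
begin

text \<open>Elements of V_q are represented by coefficient functions nat \<Rightarrow> rat w.r.t. e_0,...,e_{r-2}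
(coefficients at indices > r-2 are irrelevant/zero).\<close>

definition qq :: "nat \<Rightarrow> nat \<Rightarrow> complex" where
  "qq r s = exp (\<i> * of_real pi * of_nat s / of_nat r)"

definition qint :: "nat \<Rightarrow> nat \<Rightarrow> int \<Rightarrow> complex" where
  "qint r s n = (qq r s powi n - qq r s powi (-n)) / (qq r s - inverse (qq r s))"

definition qfact :: "nat \<Rightarrow> nat \<Rightarrow> nat \<Rightarrow> complex" where
  "qfact r s n = (\<Prod>m\<in>{1..n}. qint r s (int m))"

definition eps :: "nat \<Rightarrow> nat \<Rightarrow> nat \<Rightarrow> int" where
  "eps r s n = (-1) ^ nat \<lfloor>real (n * s) / real r\<rfloor>"

definition admissible :: "nat \<Rightarrow> nat \<Rightarrow> nat \<Rightarrow> nat \<Rightarrow> bool" where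
  "admissible r i j k \<longleftrightarrow> i \<le> r - 2 \<and> j \<le> r - 2 \<and> k \<le> r - 2 \<and>
     i \<le> j + k \<and> j \<le> i + k \<and> k \<le> i + j \<and> even (i + j + k) \<and> i + j + k \<le> 2 * r - 4"

text \<open>theta-symbol \<langle>i,j,k\<rangle> with i = b+c, j = a+c, k = a+b\<close>
definition theta :: "nat \<Rightarrow> nat \<Rightarrow> nat \<Rightarrow> nat \<Rightarrow> nat \<Rightarrow> complex" where
  "theta r s i j k = (let a = (j + k - i) div 2; b = (i + k - j) div 2; c = (i + j - k) div 2 in
     (-1) ^ (a + b + c) * qfact r s (a + b + c + 1) * qfact r s a * qfact r s b * qfact r s c
     / (qfact r s (a + b) * qfact r s (a + c) * qfact r s (b + c)))"

definition rsgn :: "real \<Rightarrow> rat" where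
  "rsgn x = (if x > 0 then 1 else if x < 0 then -1 else 0)"

text \<open>\<omega>(e_i,e_j,e_k); the theta-symbol is a real number, its sign is that of its real part\<close>
definition omega :: "nat \<Rightarrow> nat \<Rightarrow> nat \<Rightarrow> nat \<Rightarrow> nat \<Rightarrow> rat" where
  "omega r s i j k = (if admissible r i j k then rsgn (Re (theta r s i j k)) else 0)"

definition eta :: "nat \<Rightarrow> nat \<Rightarrow> nat \<Rightarrow> rat" where
  "eta r s i = (-1) ^ i * of_int (eps r s (i + 1))"

definition basis :: "nat \<Rightarrow> nat \<Rightarrow> rat" where
  "basis n = (\<lambda>k. if k = n then 1 else 0)"

text \<open>product determined by \<eta>(x\<cdot>y, e_k) = \<omega>(x,y,e_k)\<close>
definition vmult :: "nat \<Rightarrow> nat \<Rightarrow> (nat \<Rightarrow> rat) \<Rightarrow> (nat \<Rightarrow> rat) \<Rightarrow> (nat \<Rightarrow> rat)" where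
  "vmult r s x y = (\<lambda>k. if k \<le> r - 2 then
      (\<Sum>i\<le>r - 2. \<Sum>j\<le>r - 2. x i * y j * omega r s i j k) / eta r s k else 0)"

definition vadd :: "(nat \<Rightarrow> rat) \<Rightarrow> (nat \<Rightarrow> rat) \<Rightarrow> (nat \<Rightarrow> rat)" where
  "vadd x y = (\<lambda>k. x k + y k)"

definition vscale :: "rat \<Rightarrow> (nat \<Rightarrow> rat) \<Rightarrow> (nat \<Rightarrow> rat)" where
  "vscale c x = (\<lambda>k. c * x k)"

definition vsum :: "('a \<Rightarrow> nat \<Rightarrow> rat) \<Rightarrow> 'a set \<Rightarrow> (nat \<Rightarrow> rat)" where
  "vsum f A = (\<lambda>k. \<Sum>a\<in>A. f a k)"

fun vpow :: "nat \<Rightarrow> nat \<Rightarrow> (nat \<Rightarrow> rat) \<Rightarrow> nat \<Rightarrow> (nat \<Rightarrow> rat)" where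
  "vpow r s x 0 = basis 0"
| "vpow r s x (Suc n) = vmult r s x (vpow r s x n)"

definition peval :: "nat \<Rightarrow> nat \<Rightarrow> int poly \<Rightarrow> (nat \<Rightarrow> rat) \<Rightarrow> (nat \<Rightarrow> rat)" where
  "peval r s p x = vsum (\<lambda>k. vscale (of_int (coeff p k)) (vpow r s x k)) {..degree p}"

fun Ppoly :: "nat \<Rightarrow> nat \<Rightarrow> nat \<Rightarrow> int poly" where
  "Ppoly r s 0 = 1"
| "Ppoly r s (Suc 0) = [:0, 1:]"
| "Ppoly r s (Suc (Suc n)) =
     [:0, 1:] * Ppoly r s (Suc n) + smult (eps r s (Suc n) * eps r s (Suc (Suc n))) (Ppoly r s n)"

definition Omega :: "nat \<Rightarrow> nat \<Rightarrow> nat \<Rightarrow> rat" where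
  "Omega r s = vsum (\<lambda>n. vscale ((-1) ^ n * of_int (eps r s (n + 1)))
                      (vmult r s (basis n) (basis n))) {0..r - 2}"

definition OmegaPlus :: "nat \<Rightarrow> nat \<Rightarrow> nat \<Rightarrow> rat" where
  "OmegaPlus r s = vsum (\<lambda>n. vscale (of_int (eps r s (2 * n + 1)))
                      (vmult r s (basis (2 * n)) (basis (2 * n)))) {0..(r - 3) div 2}"

end

theory Submission
  imports Defs
begin

locale VQ = fixes r s :: nat
  assumes r3: "3 \<le> r" and rodd: "odd r" and sodd: "odd s" and cop: "coprime r s"
    and spos: "0 < s" and slt: "s < r"
begin

definition th :: real where "th = pi * real s / real r"

lemma rpos: "0 < real r" using r3 by simp

lemma sin_sign:
  assumes "1 \<le> n" "n < r"
  shows "sgn (sin (real n * th)) = of_int (eps r s n)"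
proof -
  define q where "q = n * s div r"
  define t where "t = n * s mod r"
  have ns: "n * s = r * q + t" unfolding q_def t_def by simp
  have t0: "t \<noteq> 0"
  proof
    assume "t = 0"
    then have "r dvd n * s" unfolding t_def by auto
    then have "r dvd n" using cop by (simp add: coprime_dvd_mult_left_iff)
    then show False using assms by (auto dest: dvd_imp_le)
  qed
  have tr: "t < r" unfolding t_def using r3 by simp
  have fl: "nat \<lfloor>real (n * s) / real r\<rfloor> = q"
    unfolding q_def by (metis floor_divide_of_nat_eq nat_int of_nat_mult)
  have "real n * th = real q * pi + pi * real t / real r"
  proof -
    have "real n * th = pi * real (n*s) / real r" unfolding th_def by simp
    also have "\<dots> = pi * (real r * real q + real t) / real r" by (simp only: ns of_nat_add of_nat_mult)
    also have "\<dots> = real q * pi + pi * real t / real r" using rpos by (simp add: field_simps)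
    finally show ?thesis .
  qed
  then have "sin (real n * th) = (-1)^q * sin (pi * real t / real r)"
    by (simp add: sin_add)
  moreover have "sin (pi * real t / real r) > 0"
    apply (rule sin_gt_zero) using t0 tr rpos by (auto simp: field_simps)
  ultimately show ?thesis unfolding eps_def fl
    by (simp add: sgn_mult)
qed
end

context VQ begin
lemma sin_th_pos: "sin th > 0"
  unfolding th_def apply (rule sin_gt_zero) using spos slt rpos by (auto simp: field_simps)

lemma qq_cis: "qq r s = cis th"
  unfolding qq_def th_def cis_conv_exp by (simp add: field_simps)

lemma qint_nat: "qint r s (int n) = complex_of_real (sin (real n * th) / sin th)"
proof -
  have a: "qq r s powi int n = cis (real n * th)" by (simp add: qq_cis cis_power_int DeMoivre)
  have b: "qq r s powi (- int n) = cis (- (real n * th))"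
    by (simp add: qq_cis cis_power_int DeMoivre)
  have c: "inverse (qq r s) = cis (- th)" by (simp add: qq_cis)
  have d: "\<And>x. cis x - cis (- x) = complex_of_real (2 * sin x) * \<i>"
    by (simp add: complex_eq_iff cis.sel)
  have "qint r s (int n) = (complex_of_real (2 * sin (real n * th)) * \<i>) / (complex_of_real (2 * sin th) * \<i>)"
    unfolding qint_def a b c d[symmetric] by (simp add: qq_cis)
  also have "\<dots> = complex_of_real (sin (real n * th) / sin th)"
    by (simp add: field_simps)
  finally show ?thesis .
qed
end

context VQ begin

definition RF :: "nat \<Rightarrow> real" where "RF n = (\<Prod>m\<in>{1..n}. sin (real m * th) / sin th)"
definition Ee :: "nat \<Rightarrow> int" where "Ee n = (\<Prod>m\<in>{1..n}. eps r s m)"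

lemma eps_sq: "eps r s n * eps r s n = 1"
  unfolding eps_def by (simp flip: power_add)

lemma Ee_0[simp]: "Ee 0 = 1" by (simp add: Ee_def)
lemma Ee_Suc: "Ee (Suc n) = Ee n * eps r s (Suc n)"
  unfolding Ee_def by (simp add: prod.nat_ivl_Suc' mult.commute)
lemma Ee_sq: "Ee n * Ee n = 1"
proof (induction n)
  case (Suc n)
  have "Ee (Suc n) * Ee (Suc n) = (Ee n * Ee n) * (eps r s (Suc n) * eps r s (Suc n))"
    by (simp add: Ee_Suc algebra_simps)
  then show ?case using Suc eps_sq by simp
qed simp

lemma qfact_real: "qfact r s n = complex_of_real (RF n)"
  unfolding qfact_def RF_def by (simp add: qint_nat)

lemma RF_sgn: "n < r \<Longrightarrow> sgn (RF n) = of_int (Ee n)"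
proof (induction n)
  case 0 then show ?case by (simp add: RF_def)
next
  case (Suc n)
  have "RF (Suc n) = RF n * (sin (real (Suc n) * th) / sin th)"
    unfolding RF_def by (simp add: prod.nat_ivl_Suc')
  then show ?case using Suc sin_sign[of "Suc n"] sin_th_pos
    by (simp add: sgn_mult Ee_Suc)
qed

lemma sgn_m1_pow[simp]: "sgn ((-1::real)^n) = (-1)^n" by (cases "even n") auto

lemma rsgn_sgn: assumes "sgn x = of_int w" shows "rsgn x = of_int w"
proof -
  have "x > 0 \<Longrightarrow> w = 1" "x < 0 \<Longrightarrow> w = -1" "x = 0 \<Longrightarrow> w = 0" using assms
    by (auto simp: sgn_real_def split: if_splits)
  then show ?thesis unfolding rsgn_def by (cases "x > 0"; cases "x < 0") auto
qed

lemma adm_form: "admissible r (b+c) (a+c) (a+b) \<longleftrightarrow> a + b + c \<le> r - 2"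
  unfolding admissible_def by auto

lemma adm_obtain:
  assumes "admissible r i j k"
  obtains a b c where "i = b + c" "j = a + c" "k = a + b" "a + b + c \<le> r - 2"
proof -
  from assms have e: "even (i+j+k)" and t: "i \<le> j+k" "j \<le> i+k" "k \<le> i+j" unfolding admissible_def by auto
  obtain m where m: "i+j+k = 2*m" using evenE[OF e] by blast
  define a where "a = m - i"
  define b where "b = m - j"
  define c where "c = m - k"
  have "i = b + c" "j = a + c" "k = a + b" unfolding a_def b_def c_def using m t by linarith+
  then show ?thesis using that assms adm_form by metis
qed

lemma sgn_div_pm: assumes "sgn (y::real) = of_int w" "w * w = 1" shows "sgn (x / y) = sgn x * of_int w"
proof -
  have ww: "real_of_int w * real_of_int w = 1" by (metis assms(2) of_int_mult of_int_1)
  then have "real_of_int w \<noteq> 0" by auto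
  then show ?thesis using assms(1) ww by (simp add: field_simps mult.assoc)
qed

lemma omega_form:
  assumes "a + b + c \<le> r - 2"
  shows "omega r s (b+c) (a+c) (a+b) =
     of_int ((-1)^(a+b+c) * Ee (a+b+c+1) * Ee a * Ee b * Ee c * Ee (a+b) * Ee (a+c) * Ee (b+c))"
proof -
  have dv: "(a + c + (a + b) - (b + c)) div 2 = a" "(b + c + (a + b) - (a + c)) div 2 = b"
    "(b + c + (a + c) - (a + b)) div 2 = c" by (simp_all add: add.commute add.left_commute flip: mult_2)
  have lt: "a+b+c+1 < r" using assms r3 by linarith
  have th: "theta r s (b+c) (a+c) (a+b) = complex_of_real
     ((-1)^(a+b+c) * RF (a+b+c+1) * RF a * RF b * RF c / (RF (a+b) * RF (a+c) * RF (b+c)))"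
    unfolding theta_def Let_def dv qfact_real by simp
  have s1: "sgn (RF n) = of_int (Ee n)" if "n \<le> a+b+c+1" for n using RF_sgn that lt by simp
  have "sgn ((-1)^(a+b+c) * RF (a+b+c+1) * RF a * RF b * RF c / (RF (a+b) * RF (a+c) * RF (b+c)))
     = of_int ((-1)^(a+b+c) * Ee (a+b+c+1) * Ee a * Ee b * Ee c * Ee (a+b) * Ee (a+c) * Ee (b+c))"
  proof -
    have y: "sgn (RF (a+b) * RF (a+c) * RF (b+c)) = of_int (Ee (a+b) * Ee (a+c) * Ee (b+c))"
      by (simp add: sgn_mult s1)
    have w: "(Ee (a+b) * Ee (a+c) * Ee (b+c)) * (Ee (a+b) * Ee (a+c) * Ee (b+c)) = 1"
    proof -
      have "(Ee (a+b) * Ee (a+c) * Ee (b+c)) * (Ee (a+b) * Ee (a+c) * Ee (b+c))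
         = (Ee (a+b) * Ee (a+b)) * (Ee (a+c) * Ee (a+c)) * (Ee (b+c) * Ee (b+c))" by (simp add: algebra_simps)
      then show ?thesis by (simp add: Ee_sq)
    qed
    have x: "sgn ((-1)^(a+b+c) * RF (a+b+c+1) * RF a * RF b * RF c) =
      of_int ((-1)^(a+b+c) * Ee (a+b+c+1) * Ee a * Ee b * Ee c)"
      by (simp add: sgn_mult s1)
    show ?thesis by (simp only: sgn_div_pm[OF y w] x) (simp add: algebra_simps)
  qed
  note sg = this
  have "omega r s (b+c) (a+c) (a+b) = rsgn (Re (theta r s (b+c) (a+c) (a+b)))"
    using assms by (simp add: omega_def adm_form)
  also have "\<dots> = rsgn ((-1)^(a+b+c) * RF (a+b+c+1) * RF a * RF b * RF c / (RF (a+b) * RF (a+c) * RF (b+c)))"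
    by (simp only: th Re_complex_of_real)
  also note rsgn_sgn[OF sg]
  finally show ?thesis .
qed

end

context VQ begin

abbreviation ep where "ep \<equiv> eps r s"

lemma eps_pm: "ep n = 1 \<or> ep n = -1"
  unfolding eps_def by (cases "even (nat \<lfloor>real (n * s) / real r\<rfloor>)") auto

lemma eps_1: "ep 1 = 1"
proof -
  have "\<lfloor>real s / real r\<rfloor> = 0" using slt spos by (simp add: floor_eq_iff)
  then show ?thesis unfolding eps_def by simp
qed

lemma sgn_int_inj: "sgn x = of_int a \<Longrightarrow> sgn x = of_int b \<Longrightarrow> a = b" for x :: real
  by simp

lemma eps_refl: assumes "1 \<le> n" "n < r" shows "ep (r - n) = ep n"
proof -
  have "real (r - n) * th = pi * real s - real n * th"
    using assms rpos unfolding th_def by (simp add: of_nat_diff field_simps)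
  then have "sin (real (r - n) * th) = sin (real n * th)"
  proof -
    have "sin (pi * real s - real n * th) = sin (real n * th)"
      using sodd by (simp add: sin_diff)
    then show ?thesis using \<open>real (r - n) * th = pi * real s - real n * th\<close> by simp
  qed
  then show ?thesis using sin_sign[of "r-n"] sin_sign[of n] assms by simp
qed

lemma eps_rm1: "ep (r - 1) = 1" using eps_refl[of 1] eps_1 r3 by simp

lemma trig3: "sin (z+u) * sin (z+v) = sin u * sin v + sin z * sin (z+u+v)" for u v z :: real
proof -
  have "cos (-u-v) = cos (u+v)" using cos_minus[of "u+v"] by simp
  then show ?thesis by (simp add: sin_times_sin algebra_simps diff_divide_distrib add_divide_distrib)
qed

lemma sgn_add_same: "sgn x = sgn y \<Longrightarrow> sgn (x + y) = sgn x" for x y :: real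
  by (auto simp: sgn_real_def split: if_splits)

lemma eps_sine:
  assumes "1 \<le> u" "1 \<le> v" "1 \<le> z" "z + u + v < r"
  shows "ep (z+u) * ep (z+v) * (1 + ep u * ep v * ep z * ep (z+u+v)) = ep u * ep v + ep z * ep (z+u+v)"
proof -
  let ?S = "\<lambda>n. sin (real n * th)"
  have sg: "sgn (?S n) = of_int (ep n)" if "1 \<le> n" "n < r" for n using sin_sign that by simp
  have id: "?S (z+u) * ?S (z+v) = ?S u * ?S v + ?S z * ?S (z+u+v)"
    using trig3[of "real z * th" "real u * th" "real v * th"] by (simp add: algebra_simps)
  have key: "ep u * ep v = ep z * ep (z+u+v) \<Longrightarrow> ep (z+u) * ep (z+v) = ep u * ep v"
  proof -
    assume h: "ep u * ep v = ep z * ep (z+u+v)"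
    have su: "sgn (?S u) = of_int (ep u)" using assms by (intro sg) auto
    have sv: "sgn (?S v) = of_int (ep v)" using assms by (intro sg) auto
    have sz: "sgn (?S z) = of_int (ep z)" using assms by (intro sg) auto
    have sw: "sgn (?S (z+u+v)) = of_int (ep (z+u+v))" using assms by (intro sg) auto
    have szu: "sgn (?S (z+u)) = of_int (ep (z+u))" using assms by (intro sg) auto
    have szv: "sgn (?S (z+v)) = of_int (ep (z+v))" using assms by (intro sg) auto
    have a: "sgn (?S u * ?S v) = of_int (ep u * ep v)" by (simp only: sgn_mult su sv of_int_mult)
    have b: "sgn (?S z * ?S (z+u+v)) = of_int (ep z * ep (z+u+v))" by (simp only: sgn_mult sz sw of_int_mult)
    have c: "sgn (?S (z+u) * ?S (z+v)) = of_int (ep (z+u) * ep (z+v))" by (simp only: sgn_mult szu szv of_int_mult)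
    have "sgn (?S (z+u) * ?S (z+v)) = sgn (?S u * ?S v)"
      unfolding id by (rule sgn_add_same) (simp only: a b h)
    then have "real_of_int (ep (z+u) * ep (z+v)) = real_of_int (ep u * ep v)" by (simp only: a c)
    then show ?thesis by (simp only: of_int_eq_iff)
  qed
  show ?thesis
    using key eps_pm[of u] eps_pm[of v] eps_pm[of z] eps_pm[of "z+u+v"] eps_pm[of "z+u"] eps_pm[of "z+v"]
    by auto
qed

end

context VQ begin

definition cc :: "nat \<Rightarrow> nat \<Rightarrow> nat \<Rightarrow> int" where
  "cc i j k = (if admissible r i j k then (let a = (j+k-i) div 2; b = (i+k-j) div 2; c = (i+j-k) div 2 in
      (-1)^(a+b+c+k) * Ee (a+b+c+1) * Ee a * Ee b * Ee c * Ee i * Ee j * Ee (k+1)) else 0)"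

lemma cc_form: "cc (b+c) (a+c) (a+b) = (if a+b+c \<le> r-2 then
   (-1)^(a+b+c+(a+b)) * Ee (a+b+c+1) * Ee a * Ee b * Ee c * Ee (b+c) * Ee (a+c) * Ee (a+b+1) else 0)"
proof -
  have dv: "(a + c + (a + b) - (b + c)) div 2 = a" "(b + c + (a + b) - (a + c)) div 2 = b"
    "(b + c + (a + c) - (a + b)) div 2 = c" by (simp_all add: add.commute add.left_commute flip: mult_2)
  show ?thesis unfolding cc_def adm_form Let_def dv by simp
qed

lemma cc_nadm: "\<not> admissible r i j k \<Longrightarrow> cc i j k = 0" unfolding cc_def by simp

lemma cc_tri1: "i > j + k \<Longrightarrow> cc i j k = 0" by (rule cc_nadm) (auto simp: admissible_def)
lemma cc_tri2: "j > i + k \<Longrightarrow> cc i j k = 0" by (rule cc_nadm) (auto simp: admissible_def)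
lemma cc_tri3: "k > i + j \<Longrightarrow> cc i j k = 0" by (rule cc_nadm) (auto simp: admissible_def)
lemma cc_par: "odd (i + j + k) \<Longrightarrow> cc i j k = 0" by (rule cc_nadm) (auto simp: admissible_def)

lemma eta_form: "eta r s k = of_int ((-1)^k * ep (k+1))" unfolding eta_def by simp

lemma div_pm: assumes "e * e = 1" shows "(of_int w :: rat) / of_int e = of_int (w * e)"
proof -
  have "e \<noteq> 0" using assms by auto
  moreover have "of_int (w * e) * (of_int e :: rat) = of_int w"
    by (simp only: of_int_mult[symmetric] mult.assoc assms mult_1_right)
  ultimately show ?thesis by (simp add: divide_eq_eq)
qed

lemma omega_eta: "omega r s i j k / eta r s k = of_int (cc i j k)"
proof (cases "admissible r i j k")
  case False then show ?thesis by (simp add: omega_def cc_nadm)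
next
  case True
  then obtain a b c where abc: "i = b + c" "j = a + c" "k = a + b" "a + b + c \<le> r - 2" by (rule adm_obtain)
  have e: "((-1)^k * ep (k+1)) * ((-1)^k * ep (k+1)) = 1"
  proof -
    have "((-1)^k * ep (k+1)) * ((-1)^k * ep (k+1)) = ((-1::int)^k * (-1)^k) * (ep (k+1) * ep (k+1))"
      by (simp only: ac_simps)
    then show ?thesis by (simp add: eps_sq flip: power_add)
  qed
  have "omega r s i j k / eta r s k = of_int (((-1)^(a+b+c) * Ee (a+b+c+1) * Ee a * Ee b * Ee c * Ee (a+b) * Ee (a+c) * Ee (b+c)) * ((-1)^k * ep (k+1)))"
    unfolding abc(1-3) omega_form[OF abc(4)] eta_form by (rule div_pm[OF e[unfolded abc(3)]])
  also have "\<dots> = of_int (cc i j k)"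
    unfolding abc(1-3) cc_form using abc(4) by (simp add: Ee_Suc power_add ac_simps)
  finally show ?thesis .
qed

end

context VQ begin

lemma eps_cancel: "ep n * (ep n * y) = y" by (simp add: mult.assoc[symmetric] eps_sq)
lemma Ee_cancel: "Ee n * (Ee n * y) = y" by (simp add: mult.assoc[symmetric] Ee_sq)
lemma m1_cancel: "(-1::int)^n * ((-1)^n * y) = y" by (simp add: mult.assoc[symmetric] flip: power_add)
lemma eps_sq': "ep n * ep n = 1" by (rule eps_sq)
lemma m1_sq: "(-1::int)^n * (-1)^n = 1" by (simp flip: power_add)

lemmas canc = eps_cancel Ee_cancel m1_cancel eps_sq' Ee_sq m1_sq

lemma case_u0: assumes "b+c+1 \<le> r-2"
  shows "- (ep (c+1) * ep (c+2) * cc (b+c+1) b (c+1)) = - (ep (b+c+1) * ep (b+c+2) * cc (b+c) b c)"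
proof -
  have 1: "cc (b+c+1) b (c+1) = cc ((c+1)+b) (0+b) (0+(c+1))" by (simp add: ac_simps)
  have 2: "cc (b+c) b c = cc (c+b) (0+b) (0+c)" by (simp add: ac_simps)
  show ?thesis unfolding 1 2 cc_form using assms by (simp add: Ee_Suc power_add ac_simps canc)
qed

lemma mult_both: "(K::int) * K = 1 \<Longrightarrow> K * x = K * y \<Longrightarrow> x = y"
  by (metis mult.assoc mult_1)

lemma case_v0: assumes "a+c+1 \<le> r-2"
  shows "cc c a (a+c) = cc (c+1) a (a+c+1)"
proof -
  have 1: "cc c a (a+c) = cc (c+0) (a+0) (a+c)" by simp
  have 2: "cc (c+1) a (a+c+1) = cc ((c+1)+0) (a+0) (a+(c+1))" by (simp add: ac_simps)
  show ?thesis unfolding 1 2 cc_form using assms by (simp add: Ee_Suc power_add ac_simps canc)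
qed

lemma case_z0:
  shows "- (ep (a+1) * ep (a+2) * cc b (a+b+1) (a+1)) = cc (b+1) (a+b+1) a"
proof -
  have 1: "cc b (a+b+1) (a+1) = cc (0+b) ((a+1)+b) ((a+1)+0)" by (simp add: ac_simps)
  have 2: "cc (b+1) (a+b+1) a = cc (0+(b+1)) (a+(b+1)) (a+0)" by (simp add: ac_simps)
  show ?thesis unfolding 1 2 cc_form by (simp add: Ee_Suc power_add ac_simps canc)
qed

lemma case_int:
  assumes "a+b+c+2 \<le> r-2"
  shows "cc (c+(b+1)) (a+(b+1)) (a+c) - ep (Suc (Suc (a+c))) * ep (Suc (Suc (Suc (a+c)))) * cc ((c+1)+b) ((a+1)+b) ((a+1)+(c+1))
    = cc ((c+1)+(b+1)) (a+(b+1)) (a+(c+1)) - ep (b+c+1) * ep (b+c+2) * cc (c+b) ((a+1)+b) ((a+1)+c)"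
proof -
  have s: "ep (c+1+(a+1)) * ep (c+1+(b+1)) * (1 + ep (a+1) * ep (b+1) * ep (c+1) * ep (c+1+(a+1)+(b+1)))
     = ep (a+1) * ep (b+1) + ep (c+1) * ep (c+1+(a+1)+(b+1))"
    by (rule eps_sine) (use assms r3 in auto)
  let ?K = "Ee (a+b+c) * Ee a * Ee b * Ee c * Ee (b+c) * Ee (a+b) * Ee (a+c) * (-1)^b *
     ep (Suc (a+b)) * ep (Suc (a+c)) * ep (Suc (b+c)) * ep (Suc (a+b+c)) * ep (Suc (Suc (a+b+c)))"
  have K: "?K * ?K = 1" by (simp add: ac_simps canc)
  have s': "ep (Suc (Suc (a+c))) * ep (Suc (Suc (b+c))) * (1 + ep (Suc a) * ep (Suc b) * ep (Suc c) * ep (Suc (Suc (Suc (a+b+c)))))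
     = ep (Suc a) * ep (Suc b) + ep (Suc c) * ep (Suc (Suc (Suc (a+b+c))))"
    using s by (simp add: ac_simps)
  show ?thesis
    apply (rule mult_both[OF K])
    unfolding cc_form using assms apply (simp add: Ee_Suc power_add ac_simps canc ring_distribs)
    using s' eps_pm[of "Suc a"] eps_pm[of "Suc b"] eps_pm[of "Suc c"] eps_pm[of "Suc (Suc (a+c))"]
      eps_pm[of "Suc (Suc (b+c))"] eps_pm[of "Suc (Suc (Suc (a+b+c)))"]
    apply (elim disjE) apply (simp_all add: ac_simps)
    done
qed

lemma case_wr:
  assumes "a+b+c+3 = r"
  shows "cc (c+(b+1)) (a+(b+1)) (a+c) = - (ep (Suc (b+c)) * ep (Suc (Suc (b+c))) * cc (c+b) ((a+1)+b) ((a+1)+c))"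
proof -
  let ?K = "Ee (a+b+c) * Ee a * Ee b * Ee c * Ee (b+c) * Ee (a+b) * Ee (a+c) * (-1)^b *
     ep (Suc (a+b)) * ep (Suc (a+c)) * ep (Suc (b+c)) * ep (Suc (a+b+c)) * ep (Suc (Suc (a+b+c)))"
  have K: "?K * ?K = 1" by (simp add: ac_simps canc)
  have r1: "ep (Suc (Suc (a+c))) = ep (Suc b)"
  proof -
    have "r - Suc b = Suc (Suc (a+c))" using assms by simp
    then show ?thesis using eps_refl[of "Suc b"] assms by simp
  qed
  have r2: "ep (Suc (Suc (b+c))) = ep (Suc a)"
  proof -
    have "r - Suc a = Suc (Suc (b+c))" using assms by simp
    then show ?thesis using eps_refl[of "Suc a"] assms by simp
  qed
  show ?thesis
    apply (rule mult_both[OF K])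
    unfolding cc_form using assms apply (simp add: Ee_Suc power_add ac_simps canc ring_distribs)
    apply (simp add: r1 r2 canc)
    done
qed

lemma cc_big: "a+b+c > r-2 \<Longrightarrow> cc (b+c) (a+c) (a+b) = 0" by (simp add: cc_form)

lemma cc_rec:
  assumes n1: "1 \<le> n" and nr: "n \<le> r-2" and mr: "m \<le> r-2"
  shows "(if 1 \<le> m then cc n j (m-1) else 0) - ep (Suc m) * ep (Suc (Suc m)) * cc n j (Suc m)
       = cc (Suc n) j m - ep n * ep (Suc n) * cc (n-1) j m"
proof (cases "even (n+j+m)")
  case True
  have 1: "cc n j (Suc m) = 0" by (rule cc_par) (use True in simp)
  have 2: "cc (Suc n) j m = 0" by (rule cc_par) (use True in simp)
  have 3: "cc (n-1) j m = 0" by (rule cc_par) (use True n1 in \<open>simp add: odd_add\<close>)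
  have 4: "1 \<le> m \<Longrightarrow> cc n j (m-1) = 0" by (rule cc_par) (use True in \<open>simp add: odd_add\<close>)
  show ?thesis using 1 2 3 4 by simp
next
  case False
  then obtain p where p: "n+j+m+1 = 2*p" by (metis evenE odd_Suc_minus_one odd_add add.commute plus_1_eq_Suc even_Suc)
  show ?thesis
  proof (cases "p < n \<or> p < m \<or> p < j")
    case True
    then consider "p < n" | "p < m" | "p < j" by blast
    then have z: "(1 \<le> m \<longrightarrow> cc n j (m-1) = 0) \<and> cc n j (Suc m) = 0 \<and> cc (Suc n) j m = 0 \<and> cc (n-1) j m = 0"
    proof cases
      case 1 then show ?thesis using p n1 by (intro conjI impI cc_tri1) linarith+
    next
      case 2 then show ?thesis using p n1 by (intro conjI impI cc_tri3) linarith+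
    next
      case 3 then show ?thesis using p n1 by (intro conjI impI cc_tri2) linarith+
    qed
    then show ?thesis by auto
  next
    case False
    define u where "u = p - n"
    define v where "v = p - m"
    define z where "z = p - j"
    have uvz: "n + 1 = z + v" "j + 1 = u + v" "m + 1 = z + u" using False p unfolding u_def v_def z_def by linarith+
    consider "u = 0" | "v = 0" | "z = 0" | "u \<ge> 1 \<and> v \<ge> 1 \<and> z \<ge> 1" by linarith
    then show ?thesis
    proof cases
      case 1
      have j: "j = v - 1" and m: "m = z - 1" and n: "n = (v-1) + (z-1) + 1" using uvz 1 n1 by linarith+
      have A: "(if 1 \<le> m then cc n j (m-1) else 0) = 0" by (auto intro!: cc_tri1 simp: n j m)
      have C: "cc (Suc n) j m = 0" by (auto intro!: cc_tri1 simp: n j m)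
      show ?thesis unfolding A C using case_u0[of "v-1" "z-1"] nr unfolding n j m
        by (simp add: ac_simps)
    next
      case 2
      have j: "j = u - 1" and n: "n = z - 1" and m: "m = (u-1) + (z-1) + 1" using uvz 2 n1 by linarith+
      have B: "cc n j (Suc m) = 0" by (auto intro!: cc_tri3 simp: n j m)
      have D: "cc (n-1) j m = 0" by (auto intro!: cc_tri3 simp: n j m)
      show ?thesis unfolding B D using case_v0[of "u-1" "z-1"] mr unfolding n j m
        by (simp add: ac_simps)
    next
      case 3
      have m: "m = u - 1" and n: "n = v - 1" and j: "j = (u-1) + (v-1) + 1" using uvz 3 n1 by linarith+
      have A: "(if 1 \<le> m then cc n j (m-1) else 0) = 0" by (auto intro!: cc_tri2 simp: n j m)
      have D: "cc (n-1) j m = 0" by (auto intro!: cc_tri2 simp: n j m)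
      show ?thesis unfolding A D using case_z0[of "u-1" "v-1"] unfolding n j m
        by (simp add: ac_simps)
    next
      case 4
      define a where "a = u - 1"
      define b where "b = v - 1"
      define c where "c = z - 1"
      have n: "n = b+c+1" and j: "j = a+b+1" and m: "m = a+c+1" using uvz 4 unfolding a_def b_def c_def by linarith+
      have eA: "(if 1 \<le> m then cc n j (m-1) else 0) = cc (c+(b+1)) (a+(b+1)) (a+c)" by (simp add: n j m ac_simps)
      have eB: "cc n j (Suc m) = cc ((c+1)+b) ((a+1)+b) ((a+1)+(c+1))" by (simp add: n j m ac_simps)
      have eC: "cc (Suc n) j m = cc ((c+1)+(b+1)) (a+(b+1)) (a+(c+1))" by (simp add: n j m ac_simps)
      have eD: "cc (n-1) j m = cc (c+b) ((a+1)+b) ((a+1)+c)" by (simp add: n j m ac_simps)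
      have eps_eq: "ep (Suc m) * ep (Suc (Suc m)) = ep (Suc (Suc (a+c))) * ep (Suc (Suc (Suc (a+c))))"
        "ep n * ep (Suc n) = ep (b+c+1) * ep (b+c+2)" by (simp_all add: n m)
      consider "a+b+c+2 \<le> r-2" | "a+b+c+3 = r" | "a+b+c+3 > r" by linarith
      then show ?thesis
      proof cases
        case 1 then show ?thesis unfolding eA eB eC eD eps_eq by (rule case_int)
      next
        case 2
        have "cc ((c+1)+b) ((a+1)+b) ((a+1)+(c+1)) = 0" using 2 cc_big[of "a+1" "c+1" b] by simp
        moreover have "cc ((c+1)+(b+1)) (a+(b+1)) (a+(c+1)) = 0" using 2 cc_big[of a "c+1" "b+1"] by simp
        ultimately show ?thesis unfolding eA eB eC eD eps_eq using case_wr[OF 2] by simp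
      next
        case 3
        have "cc ((c+1)+b) ((a+1)+b) ((a+1)+(c+1)) = 0" using 3 cc_big[of "a+1" "c+1" b] by simp
        moreover have "cc ((c+1)+(b+1)) (a+(b+1)) (a+(c+1)) = 0" using 3 cc_big[of a "c+1" "b+1"] by simp
        moreover have "cc (c+(b+1)) (a+(b+1)) (a+c) = 0" using 3 cc_big[of a c "b+1"] by simp
        moreover have "cc (c+b) ((a+1)+b) ((a+1)+c) = 0" using 3 cc_big[of "a+1" c b] by simp
        ultimately show ?thesis unfolding eA eB eC eD eps_eq by simp
      qed
    qed
  qed
qed

end

context VQ begin

lemma cc_big_i: "i > r - 2 \<Longrightarrow> cc i j k = 0" by (rule cc_nadm) (auto simp: admissible_def)
lemma cc_big_j: "j > r - 2 \<Longrightarrow> cc i j k = 0" by (rule cc_nadm) (auto simp: admissible_def)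
lemma cc_big_k: "k > r - 2 \<Longrightarrow> cc i j k = 0" by (rule cc_nadm) (auto simp: admissible_def)

lemma vmult_basis: "vmult r s (basis n) y k = (if k \<le> r-2 then (\<Sum>j\<le>r-2. y j * of_int (cc n j k)) else 0)"
proof (cases "k \<le> r - 2")
  case True
  show ?thesis
  proof (cases "n \<le> r - 2")
    case True
    have "vmult r s (basis n) y k = (\<Sum>j\<le>r - 2. y j * omega r s n j k) / eta r s k"
      unfolding vmult_def basis_def using \<open>k \<le> r-2\<close> True
      by (simp add: if_distrib[of "\<lambda>x. x * _"] cong: if_cong, subst sum.swap, simp add: sum.delta)
    also have "\<dots> = (\<Sum>j\<le>r - 2. y j * (omega r s n j k / eta r s k))"
      by (simp add: sum_divide_distrib)
    finally show ?thesis using \<open>k \<le> r-2\<close> by (simp add: omega_eta)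
  next
    case False
    then show ?thesis unfolding vmult_def basis_def by (auto simp: cc_big_i)
  qed
qed (simp add: vmult_def)

lemma cc_zero_row: "cc 0 j k = (if j = k \<and> k \<le> r-2 then 1 else 0)"
proof (cases "j = k \<and> k \<le> r-2")
  case True
  have "cc 0 j k = cc (0+0) (k+0) (k+0)" using True by simp
  also have "\<dots> = 1" using True by (simp only: cc_form) (simp add: Ee_Suc canc ac_simps)
  finally show ?thesis using True by simp
next
  case False
  then consider "j > k" | "k > j" | "j = k" "k > r-2" by linarith
  then show ?thesis using False
  proof cases
    case 1 then show ?thesis using False by (simp add: cc_tri2)
  next
    case 2 then show ?thesis using False by (simp add: cc_tri3)
  next
    case 3 then show ?thesis using False by (simp add: cc_big_k)
  qed
qed

lemma cc_one: assumes "m \<le> r-2" "j \<le> r-2"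
  shows "cc 1 j m = (if j + 1 = m then 1 else if j = m + 1 then - ep (Suc m) * ep (Suc (Suc m)) else 0)"
proof -
  consider "j + 1 = m" | "j = m + 1" | "j + 1 \<noteq> m \<and> j \<noteq> m + 1" by blast
  then show ?thesis
  proof cases
    case 1
    have e: "cc (1+0) (j+0) (j+1) = 1" using 1 assms by (subst cc_form) (simp add: Ee_Suc canc ac_simps)
    have "cc 1 j m = cc (1+0) (j+0) (j+1)" using 1 by simp
    then have "cc 1 j m = 1" using e by (rule trans)
    then show ?thesis using 1 by (simp only: if_P)
  next
    case 2
    have e: "cc (0+1) (m+1) (m+0) = - ep (Suc m) * ep (Suc (Suc m))" using 2 assms
      by (subst cc_form) (simp add: Ee_Suc canc ac_simps)
    have "cc 1 j m = cc (0+1) (m+1) (m+0)" using 2 by simp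
    then have "cc 1 j m = - ep (Suc m) * ep (Suc (Suc m))" using e by (rule trans)
    moreover have "j + 1 \<noteq> m" using 2 by simp
    ultimately show ?thesis using 2 by (simp only: if_P if_not_P if_False)
  next
    case 3
    then have "cc 1 j m = 0"
    proof (cases "even (1 + j + m)")
      case True
      have "j \<noteq> m" using True by auto
      then have "j > 1 + m \<or> m > 1 + j" using 3 by linarith
      then show ?thesis using cc_tri2 cc_tri3 by blast
    qed (simp add: cc_par)
    then show ?thesis using 3 by simp
  qed
qed

lemma vmult_basis0: "vmult r s (basis 0) y k = (if k \<le> r-2 then y k else 0)"
proof -
  have "(\<Sum>j\<le>r-2. y j * of_int (cc 0 j k)) = (\<Sum>j\<le>r-2. if j = k \<and> k \<le> r-2 then y j else 0)"
    by (rule sum.cong) (auto simp: cc_zero_row)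
  then show ?thesis unfolding vmult_basis by (cases "k \<le> r-2") (simp_all add: sum.delta)
qed

abbreviation lam where "lam n \<equiv> ep n * ep (Suc n)"

lemma L_form: "vmult r s (basis 1) y m = (if m \<le> r-2 then (if 1 \<le> m then y (m-1) else 0)
   - of_int (lam (Suc m)) * (if Suc m \<le> r-2 then y (Suc m) else 0) else 0)"
proof (cases "m \<le> r-2")
  case True
  have "(\<Sum>j\<le>r-2. y j * of_int (cc 1 j m)) = (\<Sum>j\<le>r-2. (if j = m - 1 then (if 1 \<le> m then y j else 0) else 0)
     + (if j = Suc m then - of_int (lam (Suc m)) * y j else 0))"
  proof (rule sum.cong)
    fix j assume "j \<in> {..r-2}"
    then have "j \<le> r-2" by simp
    then show "y j * of_int (cc 1 j m) = (if j = m - 1 then (if 1 \<le> m then y j else 0) else 0)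
     + (if j = Suc m then - of_int (lam (Suc m)) * y j else 0)"
      unfolding cc_one[OF True \<open>j \<le> r-2\<close>] by auto
  qed simp
  also have "\<dots> = (if 1 \<le> m then y (m-1) else 0) - of_int (lam (Suc m)) * (if Suc m \<le> r-2 then y (Suc m) else 0)"
    using True by (simp add: sum.distrib sum.delta) linarith
  finally show ?thesis using True by (simp add: vmult_basis)
qed (simp add: vmult_basis)

lemma M_rec: assumes "Suc n \<le> r-2"
  shows "vmult r s (basis (Suc (Suc n))) y = vadd (vmult r s (basis 1) (vmult r s (basis (Suc n)) y))
     (vscale (of_int (lam (Suc n))) (vmult r s (basis n) y))"
proof
  fix m
  show "vmult r s (basis (Suc (Suc n))) y m = vadd (vmult r s (basis 1) (vmult r s (basis (Suc n)) y))
     (vscale (of_int (lam (Suc n))) (vmult r s (basis n) y)) m"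
  proof (cases "m \<le> r-2")
    case False then show ?thesis by (simp add: vadd_def vscale_def vmult_basis L_form)
  next
    case True
    have rec: "y j * of_int (cc (Suc (Suc n)) j m) = (if 1 \<le> m then y j * of_int (cc (Suc n) j (m-1)) else 0)
       - of_int (lam (Suc m)) * (y j * of_int (cc (Suc n) j (Suc m))) + of_int (lam (Suc n)) * (y j * of_int (cc n j m))" for j
    proof -
      have "(if 1 \<le> m then cc (Suc n) j (m-1) else 0) - lam (Suc m) * cc (Suc n) j (Suc m)
         = cc (Suc (Suc n)) j m - lam (Suc n) * cc (Suc n - 1) j m"
        using cc_rec[of "Suc n" m j] assms True by (simp add: mult.assoc)
      then have "cc (Suc (Suc n)) j m = (if 1 \<le> m then cc (Suc n) j (m-1) else 0) - lam (Suc m) * cc (Suc n) j (Suc m)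
         + lam (Suc n) * cc n j m" by simp
      then have "rat_of_int (cc (Suc (Suc n)) j m) = rat_of_int ((if 1 \<le> m then cc (Suc n) j (m-1) else 0) - lam (Suc m) * cc (Suc n) j (Suc m)
         + lam (Suc n) * cc n j m)" by (rule arg_cong)
      then have "y j * rat_of_int (cc (Suc (Suc n)) j m) = y j * rat_of_int ((if 1 \<le> m then cc (Suc n) j (m-1) else 0) - lam (Suc m) * cc (Suc n) j (Suc m)
         + lam (Suc n) * cc n j m)" by (rule arg_cong)
      then show ?thesis by (cases "1 \<le> m") (simp_all add: ring_distribs mult.assoc)
    qed
    have a: "(if 1 \<le> m then vmult r s (basis (Suc n)) y (m-1) else 0) = (\<Sum>j\<le>r-2. (if 1 \<le> m then y j * of_int (cc (Suc n) j (m-1)) else 0))"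
      using True by (simp add: vmult_basis)
    have b: "(if Suc m \<le> r-2 then vmult r s (basis (Suc n)) y (Suc m) else 0) = (\<Sum>j\<le>r-2. y j * of_int (cc (Suc n) j (Suc m)))"
      by (simp add: vmult_basis cc_big_k)
    show ?thesis
      using True unfolding vadd_def vscale_def L_form a b
      by (simp add: vmult_basis rec sum.distrib sum_subtractf sum_distrib_left)
  qed
qed

end

context VQ begin

lemma Mb_add: "vmult r s (basis n) (vadd y z) = vadd (vmult r s (basis n) y) (vmult r s (basis n) z)"
  by (rule ext) (simp add: vmult_basis vadd_def ring_distribs sum.distrib)

lemma Mb_scale: "vmult r s (basis n) (vscale c y) = vscale c (vmult r s (basis n) y)"
  by (rule ext) (simp add: vmult_basis vscale_def sum_distrib_left mult.assoc)

lemma Mb_zero: "vmult r s (basis n) (\<lambda>_. 0) = (\<lambda>_. 0)"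
  by (rule ext) (simp add: vmult_basis)

lemma Mb_sum: "finite A \<Longrightarrow> vmult r s (basis n) (\<lambda>k. \<Sum>i\<in>A. f i * v i k) = (\<lambda>k. \<Sum>i\<in>A. f i * vmult r s (basis n) (v i) k)"
  by (rule ext) (simp add: vmult_basis sum_distrib_left sum_distrib_right mult.assoc sum.swap[of _ A])

lemma Mb_local: "(\<And>k. k \<le> r-2 \<Longrightarrow> y k = y' k) \<Longrightarrow> vmult r s (basis n) y = vmult r s (basis n) y'"
  by (rule ext) (simp add: vmult_basis)

lemma Mb_out: "k > r-2 \<Longrightarrow> vmult r s (basis n) y k = 0"
  by (simp add: vmult_basis)

lemma Mb_big: "n > r-2 \<Longrightarrow> vmult r s (basis n) y = (\<lambda>_. 0)"
  by (rule ext) (simp add: vmult_basis cc_big_i)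

lemma Mb0: "vmult r s (basis 0) (vmult r s (basis n) y) = vmult r s (basis n) y"
  by (rule ext) (simp add: vmult_basis0 Mb_out)

lemma Mb0': "vmult r s (basis n) (vmult r s (basis 0) y) = vmult r s (basis n) y"
  by (rule Mb_local) (simp add: vmult_basis0)

lemma Mb_comm_L: "vmult r s (basis n) (vmult r s (basis 1) y) = vmult r s (basis 1) (vmult r s (basis n) y)"
proof (induction n rule: nat_less_induct)
  case (1 n)
  show ?case
  proof (cases n)
    case 0 then show ?thesis by (simp add: Mb0 Mb0')
  next
    case (Suc n1)
    show ?thesis
    proof (cases n1)
      case 0 then show ?thesis using Suc by simp
    next
      case (Suc k)
      have n: "n = Suc (Suc k)" using Suc \<open>n = Suc n1\<close> by simp
      show ?thesis
      proof (cases "Suc k \<le> r-2")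
        case True
        have ih1: "vmult r s (basis (Suc k)) (vmult r s (basis 1) y) = vmult r s (basis 1) (vmult r s (basis (Suc k)) y)"
          using 1 n by simp
        have ih2: "vmult r s (basis k) (vmult r s (basis 1) y) = vmult r s (basis 1) (vmult r s (basis k) y)"
          using 1 n by simp
        show ?thesis unfolding n M_rec[OF True] ih1 ih2 Mb_add Mb_scale ..
      next
        case False
        then show ?thesis unfolding n by (simp add: Mb_big Mb_zero)
      qed
    qed
  qed
qed

end

context VQ begin

definition ev :: "int poly \<Rightarrow> nat \<Rightarrow> rat" where "ev p = peval r s p (basis 1)"

abbreviation vp where "vp k \<equiv> vpow r s (basis 1) k"

lemma ev_K: assumes "degree p \<le> K" shows "ev p t = (\<Sum>k\<le>K. of_int (coeff p k) * vp k t)"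
proof -
  have "ev p t = (\<Sum>k\<le>degree p. of_int (coeff p k) * vp k t)"
    unfolding ev_def peval_def vsum_def vscale_def by simp
  also have "\<dots> = (\<Sum>k\<le>K. of_int (coeff p k) * vp k t)"
    by (rule sum.mono_neutral_left) (use assms in \<open>auto simp: coeff_eq_0\<close>)
  finally show ?thesis .
qed

lemma ev_add: "ev (p + q) = vadd (ev p) (ev q)"
proof
  fix t
  let ?K = "max (degree p) (degree q)"
  have "degree (p + q) \<le> ?K" by (rule degree_add_le_max)
  note a = ev_K[OF this]
  have b: "ev p t = (\<Sum>k\<le>?K. of_int (coeff p k) * vp k t)" by (rule ev_K) simp
  have c: "ev q t = (\<Sum>k\<le>?K. of_int (coeff q k) * vp k t)" by (rule ev_K) simp
  show "ev (p + q) t = vadd (ev p) (ev q) t"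
    unfolding vadd_def a b c by (simp add: ring_distribs sum.distrib)
qed

lemma ev_smult: "ev (smult c p) = vscale (of_int c) (ev p)"
proof
  fix t
  have "degree (smult c p) \<le> degree p" by (rule degree_smult_le)
  note a = ev_K[OF this]
  have b: "ev p t = (\<Sum>k\<le>degree p. of_int (coeff p k) * vp k t)" by (rule ev_K) simp
  show "ev (smult c p) t = vscale (of_int c) (ev p) t"
    unfolding vscale_def a b by (simp add: sum_distrib_left mult.assoc)
qed

lemma ev_zero: "ev 0 = (\<lambda>_. 0)"
  unfolding ev_def peval_def vsum_def vscale_def by simp

lemma ev_one: "ev 1 = basis 0"
  unfolding ev_def peval_def vsum_def vscale_def by (rule ext) simp

lemma ev_X: "ev (pCons 0 p) = vmult r s (basis 1) (ev p)"
proof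
  fix t
  have d: "degree (pCons 0 p) \<le> Suc (degree p)" by simp
  have "ev (pCons 0 p) t = (\<Sum>k\<le>Suc (degree p). of_int (coeff (pCons 0 p) k) * vp k t)"
    by (rule ev_K[OF d])
  also have "\<dots> = (\<Sum>k\<le>degree p. of_int (coeff p k) * vp (Suc k) t)"
    by (subst sum.atMost_Suc_shift) simp
  also have "\<dots> = vmult r s (basis 1) (\<lambda>t. \<Sum>k\<le>degree p. of_int (coeff p k) * vp k t) t"
    by (simp add: Mb_sum)
  also have "(\<lambda>t. \<Sum>k\<le>degree p. of_int (coeff p k) * vp k t) = ev p"
    by (rule ext, rule ev_K[symmetric]) simp
  finally show "ev (pCons 0 p) t = vmult r s (basis 1) (ev p) t" .
qed

lemma ev_Xmult: "ev ([:0,1:] * p) = vmult r s (basis 1) (ev p)"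
  by (simp add: ev_X)

lemma cc_col0: "cc n 0 k = (if n = k \<and> k \<le> r-2 then 1 else 0)"
proof (cases "n = k \<and> k \<le> r-2")
  case True
  have "cc n 0 k = cc (k+0) (0+0) (0+k)" using True by simp
  also have "\<dots> = 1" using True by (simp only: cc_form) (simp add: Ee_Suc canc ac_simps)
  finally show ?thesis using True by simp
next
  case False
  then consider "n > k" | "k > n" | "n = k" "k > r-2" by linarith
  then show ?thesis using False
  proof cases
    case 1 then show ?thesis using False by (simp add: cc_tri1)
  next
    case 2 then show ?thesis using False by (simp add: cc_tri3)
  next
    case 3 then show ?thesis using False by (simp add: cc_big_k)
  qed
qed

lemma Mb_basis0: "n \<le> r-2 \<Longrightarrow> vmult r s (basis n) (basis 0) = basis n"
proof
  fix t assume n: "n \<le> r-2"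
  have "(\<Sum>j\<le>r-2. basis 0 j * of_int (cc n j t)) = (\<Sum>j\<le>r-2. if j = 0 then of_int (cc n j t) else 0)"
    by (rule sum.cong) (auto simp: basis_def)
  also have "\<dots> = of_int (cc n 0 t)" by (simp add: sum.delta)
  finally have "(\<Sum>j\<le>r-2. basis 0 j * of_int (cc n j t)) = of_int (cc n 0 t)" .
  then show "vmult r s (basis n) (basis 0) t = basis n t"
    using n by (simp only: vmult_basis) (simp add: cc_col0 basis_def)
qed

lemma ev_P: "n \<le> r-1 \<Longrightarrow> ev (Ppoly r s n) = vmult r s (basis n) (basis 0)"
proof (induction n rule: nat_less_induct)
  case (1 n)
  show ?case
  proof (cases n)
    case 0 then show ?thesis using r3 by (simp add: ev_one Mb_basis0)
  next
    case (Suc n1)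
    show ?thesis
    proof (cases n1)
      case 0
      have n: "n = Suc 0" using Suc 0 by simp
      have "Ppoly r s (Suc 0) = pCons 0 1" by simp
      then have "ev (Ppoly r s (Suc 0)) = vmult r s (basis 1) (basis 0)" by (simp only: ev_X ev_one)
      then show ?thesis unfolding n using r3 by simp
    next
      case (Suc k)
      have n: "n = Suc (Suc k)" using Suc \<open>n = Suc n1\<close> by simp
      have kk: "Suc k \<le> r-2" using 1(2) n r3 by linarith
      have ih1: "ev (Ppoly r s (Suc k)) = vmult r s (basis (Suc k)) (basis 0)" using 1 n by simp
      have ih2: "ev (Ppoly r s k) = vmult r s (basis k) (basis 0)" using 1 n by simp
      show ?thesis unfolding n M_rec[OF kk] by (simp add: ev_add ev_smult ev_X ih1 ih2)
    qed
  qed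
qed

end

context VQ begin

definition Dv :: "nat \<Rightarrow> nat \<Rightarrow> rat" where "Dv n = ev (pderiv (Ppoly r s n))"

lemma Dv0: "Dv 0 = (\<lambda>_. 0)" unfolding Dv_def by (simp add: ev_zero)
lemma Dv1: "Dv (Suc 0) = basis 0" unfolding Dv_def by (simp add: ev_one pderiv_pCons pCons_one)

lemma Dv_rec: "Dv (Suc (Suc n)) = vadd (vadd (ev (Ppoly r s (Suc n))) (vmult r s (basis 1) (Dv (Suc n))))
   (vscale (of_int (lam (Suc n))) (Dv n))"
proof -
  have "pderiv (Ppoly r s (Suc (Suc n))) = Ppoly r s (Suc n) + pCons 0 (pderiv (Ppoly r s (Suc n)))
     + smult (lam (Suc n)) (pderiv (Ppoly r s n))"
    by (simp add: pderiv_mult pderiv_add pderiv_smult pderiv_pCons)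
  then show ?thesis unfolding Dv_def by (simp add: ev_add ev_smult ev_X)
qed

definition eta' :: "nat \<Rightarrow> rat" where "eta' k = (-1)^k * of_int (ep (k+1))"

lemma eta'_rel: "eta' n = - (eta' (Suc n) * of_int (lam (Suc n)))"
proof -
  have "eta' (Suc n) * of_int (lam (Suc n)) = (-1)^Suc n * of_int (ep (Suc n) * (ep (Suc (Suc n)) * ep (Suc (Suc n))))"
    unfolding eta'_def by (simp add: ac_simps)
  also have "\<dots> = - eta' n" unfolding eta'_def by (simp add: eps_sq)
  finally show ?thesis by simp
qed

lemma CD: "n \<le> r-2 \<Longrightarrow> (\<Sum>k\<le>n. eta' k * vmult r s (basis k) (basis k) t)
   = eta' n * (vmult r s (basis n) (Dv (Suc n)) t - vmult r s (basis (Suc n)) (Dv n) t)"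
proof (induction n)
  case 0
  show ?case by (simp add: Dv0 Dv1 Mb_zero)
next
  case (Suc n)
  have nn: "Suc n \<le> r-2" using Suc by simp
  have IH: "(\<Sum>k\<le>n. eta' k * vmult r s (basis k) (basis k) t)
   = eta' n * (vmult r s (basis n) (Dv (Suc n)) t - vmult r s (basis (Suc n)) (Dv n) t)" using Suc by simp
  have e1: "vmult r s (basis (Suc n)) (Dv (Suc (Suc n))) t = vmult r s (basis (Suc n)) (basis (Suc n)) t
     + vmult r s (basis 1) (vmult r s (basis (Suc n)) (Dv (Suc n))) t
     + of_int (lam (Suc n)) * vmult r s (basis (Suc n)) (Dv n) t"
    unfolding Dv_rec Mb_add Mb_scale Mb_comm_L using ev_P[of "Suc n"] Mb_basis0[OF nn] nn
    by (simp add: vadd_def vscale_def)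
  have e2: "vmult r s (basis (Suc (Suc n))) (Dv (Suc n)) t =
     vmult r s (basis 1) (vmult r s (basis (Suc n)) (Dv (Suc n))) t + of_int (lam (Suc n)) * vmult r s (basis n) (Dv (Suc n)) t"
    unfolding M_rec[OF nn] by (simp add: vadd_def vscale_def)
  show ?case
    unfolding sum.atMost_Suc IH e1 e2 eta'_rel[of n] by (simp add: algebra_simps)
qed

end

context VQ begin

lemma omega_sym: "omega r s i j k = omega r s j i k"
proof -
  have a: "admissible r i j k = admissible r j i k" unfolding admissible_def by (auto simp: ac_simps)
  have t: "theta r s i j k = theta r s j i k" unfolding theta_def Let_def by (simp add: ac_simps)
  show ?thesis unfolding omega_def a t ..
qed

lemma vmult_comm: "vmult r s x y = vmult r s y x"
proof
  fix k
  have "(\<Sum>i\<le>r-2. \<Sum>j\<le>r-2. x i * y j * omega r s i j k) = (\<Sum>j\<le>r-2. \<Sum>i\<le>r-2. x i * y j * omega r s i j k)"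
    by (rule sum.swap)
  also have "\<dots> = (\<Sum>i\<le>r-2. \<Sum>j\<le>r-2. y i * x j * omega r s i j k)"
    by (simp add: omega_sym[of _ _ k] ac_simps)
  finally show "vmult r s x y k = vmult r s y x k" unfolding vmult_def by simp
qed

lemma eta'_N: "eta' (r-2) = -1"
proof -
  have "r - 2 + 1 = r - 1" using r3 by simp
  moreover have "odd (r - 2)" using rodd r3 by (simp add: )
  ultimately show ?thesis unfolding eta'_def using eps_rm1 by simp
qed

lemma Omega_eq: "Omega r s t = (\<Sum>k\<le>r-2. eta' k * vmult r s (basis k) (basis k) t)"
  unfolding Omega_def vsum_def vscale_def eta'_def by (simp add: atLeast0AtMost)

lemma claim2: "Omega r s = vscale (-1) (vmult r s (basis (r - 2)) (peval r s (pderiv (Ppoly r s (r - 1))) (basis 1)))"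
proof
  fix t
  have rr: "Suc (r-2) = r - 1" using r3 by simp
  have "Omega r s t = eta' (r-2) * (vmult r s (basis (r-2)) (Dv (Suc (r-2))) t - vmult r s (basis (Suc (r-2))) (Dv (r-2)) t)"
    unfolding Omega_eq by (rule CD) simp
  also have "\<dots> = - vmult r s (basis (r-2)) (Dv (r-1)) t"
    unfolding eta'_N rr using r3 by (simp add: Mb_big)
  finally show "Omega r s t = vscale (-1) (vmult r s (basis (r - 2)) (peval r s (pderiv (Ppoly r s (r - 1))) (basis 1))) t"
    unfolding vscale_def Dv_def ev_def by simp
qed

lemma claim1: "Omega r s = vscale (-1) (vmult r s (peval r s (pderiv (Ppoly r s (r - 1))) (basis 1))
                                           (peval r s (Ppoly r s (r - 2)) (basis 1)))"
proof -
  have "peval r s (Ppoly r s (r - 2)) (basis 1) = basis (r-2)"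
    using ev_P[of "r-2"] Mb_basis0[of "r-2"] unfolding ev_def by simp
  then show ?thesis unfolding claim2 by (simp add: vmult_comm[of _ "basis (r-2)"])
qed

end

context VQ begin

lemma diag_form: "n \<le> r-2 \<Longrightarrow> vmult r s (basis n) (basis n) t = (if t \<le> r-2 then of_int (cc n n t) else 0)"
proof -
  assume n: "n \<le> r-2"
  have "(\<Sum>j\<le>r-2. basis n j * of_int (cc n j t)) = (\<Sum>j\<le>r-2. if j = n then of_int (cc n j t) else 0)"
    by (rule sum.cong) (auto simp: basis_def)
  also have "\<dots> = of_int (cc n n t)" using n by (simp add: sum.delta)
  finally show ?thesis by (simp only: vmult_basis)
qed

lemma claim4: "odd k \<Longrightarrow> OmegaPlus r s k = 0"
proof -
  assume k: "odd k"
  have "vmult r s (basis (2*n)) (basis (2*n)) k = 0" for n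
  proof (cases "2*n \<le> r-2")
    case True then show ?thesis using k by (simp add: diag_form cc_par)
  next
    case False then show ?thesis by (simp add: Mb_big)
  qed
  then show ?thesis unfolding OmegaPlus_def vsum_def vscale_def by simp
qed

lemma Ee_refl: "x \<le> r-1 \<Longrightarrow> Ee (r-1-x) = Ee (r-1) * Ee x"
proof (induction x)
  case 0 then show ?case by simp
next
  case (Suc x)
  define y where "y = r - 1 - Suc x"
  have a: "r - 1 - x = Suc y" using Suc.prems unfolding y_def by simp
  have a2: "Suc y = r - Suc x" using Suc.prems unfolding y_def by simp
  have b: "ep (Suc y) = ep (Suc x)" unfolding a2 by (rule eps_refl) (use Suc.prems in simp_all)
  have IH: "Ee (Suc y) = Ee (r-1) * Ee x" using Suc by (simp only: a[symmetric])
  have c: "Ee (Suc y) = Ee y * ep (Suc x)" by (simp only: Ee_Suc b)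
  have "Ee y = Ee y * (ep (Suc x) * ep (Suc x))" by (simp add: eps_sq)
  also have "\<dots> = Ee (r-1) * Ee x * ep (Suc x)" using IH c by (simp add: mult.assoc)
  also have "\<dots> = Ee (r-1) * Ee (Suc x)" by (simp add: Ee_Suc mult.assoc)
  finally show ?case unfolding y_def .
qed

lemma diag_sym_int: assumes "n \<le> r-2" "t \<le> r-2"
  shows "(-1)^(r-2-n) * ep (r-2-n+1) * cc (r-2-n) (r-2-n) t = (-1)^n * ep (n+1) * cc n n t"
proof (cases "even t")
  case False
  then show ?thesis by (simp add: cc_par)
next
  case True
  then obtain a where t: "t = a + a" by (metis evenE mult_2)
  define n' where "n' = r - 2 - n"
  consider "n < a" | "n' < a" | "a \<le> n" "a \<le> n'" by linarith
  then show ?thesis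
  proof cases
    case 1
    have "cc n n t = 0" using 1 t by (simp add: cc_tri3)
    moreover have "cc n' n' t = 0" using 1 t assms unfolding n'_def by (intro cc_nadm) (auto simp: admissible_def)
    ultimately show ?thesis unfolding n'_def by simp
  next
    case 2
    have "cc n' n' t = 0" using 2 t by (simp add: cc_tri3)
    moreover have "cc n n t = 0" using 2 t assms unfolding n'_def by (intro cc_nadm) (auto simp: admissible_def)
    ultimately show ?thesis unfolding n'_def[symmetric] by simp
  next
    case 3
    define c where "c = n - a"
    define c' where "c' = n' - a"
    have n: "n = a + c" and n': "n' = a + c'" using 3 unfolding c_def c'_def by simp_all
    have sumc: "a + a + c + c' = r - 2" using 3 assms unfolding c_def c'_def n'_def by linarith
    have F1: "ep (Suc (a + c')) = ep (Suc (a + c))"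
    proof -
      have "Suc (a + c') = r - Suc (a + c)" using sumc r3 by linarith
      then show ?thesis using eps_refl[of "Suc (a+c)"] sumc by simp
    qed
    have F2: "Ee (Suc (a + a + c')) = Ee (r-1) * Ee c"
    proof -
      have "Suc (a + a + c') = r - 1 - c" using sumc r3 by linarith
      then show ?thesis using Ee_refl[of c] sumc by simp
    qed
    have F3: "Ee c' = Ee (r-1) * Ee (Suc (a + a + c))"
    proof -
      have "c' = r - 1 - Suc (a + a + c)" using sumc r3 by linarith
      moreover have le: "Suc (a+a+c) \<le> r-1" using sumc r3 by linarith
      ultimately show ?thesis using Ee_refl[OF le] by simp
    qed
    have C: "cc n n t = (-1)^(a+a+c+(a+a)) * Ee (a+a+c+1) * Ee a * Ee a * Ee c * Ee (a+c) * Ee (a+c) * Ee (a+a+1)"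
      using cc_form[of a c a] sumc unfolding n t by simp
    have C': "cc n' n' t = (-1)^(a+a+c'+(a+a)) * Ee (a+a+c'+1) * Ee a * Ee a * Ee c' * Ee (a+c') * Ee (a+c') * Ee (a+a+1)"
      using cc_form[of a c' a] sumc unfolding n' t by simp
    have P: "(-1::int)^(a+c') * (-1)^(a+a+c'+(a+a)) = (-1)^(a+c) * (-1)^(a+a+c+(a+a))"
      by (simp add: minus_one_power_iff even_add flip: power_add)
    have "(-1)^n' * ep (n'+1) * cc n' n' t = (-1)^n * ep (n+1) * cc n n t"
      unfolding C C' unfolding n n' using F1 F2 F3 P
      by (simp add: ac_simps canc)
    then show ?thesis unfolding n'_def .
  qed
qed

lemma sum_even_odd: "(\<Sum>k<2*m. g k) = (\<Sum>i<m. g (2*i) + g (2*i+1))" for g :: "nat \<Rightarrow> rat"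
  by (induction m) (simp_all add: sum.lessThan_Suc)

lemma fsym: assumes "k \<le> r-2"
  shows "eta' (r-2-k) * vmult r s (basis (r-2-k)) (basis (r-2-k)) t = eta' k * vmult r s (basis k) (basis k) t"
proof (cases "t \<le> r-2")
  case True
  have "rat_of_int ((-1)^(r-2-k) * ep (r-2-k+1) * cc (r-2-k) (r-2-k) t) = rat_of_int ((-1)^k * ep (k+1) * cc k k t)"
    using diag_sym_int[OF assms True] by simp
  then show ?thesis using assms True by (simp add: diag_form eta'_def)
next
  case False then show ?thesis by (simp add: Mb_out)
qed

lemma claim3: "Omega r s = vscale 2 (OmegaPlus r s)"
proof
  fix t
  define h where "h = (r - 3) div 2"
  have N: "r - 2 = 2*h + 1" using rodd r3 unfolding h_def by presburger
  let ?f = "\<lambda>k. eta' k * vmult r s (basis k) (basis k) t"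
  have "Omega r s t = (\<Sum>k<2*(Suc h). ?f k)" unfolding Omega_eq N by (simp add: lessThan_Suc_atMost[symmetric])
  also have "\<dots> = (\<Sum>i<Suc h. ?f (2*i) + ?f (2*i+1))" by (rule sum_even_odd)
  also have "\<dots> = (\<Sum>i<Suc h. ?f (2*i)) + (\<Sum>i<Suc h. ?f (2*(h-i)))"
  proof -
    have "?f (2*i+1) = ?f (2*(h-i))" if "i < Suc h" for i
    proof -
      have "r - 2 - (2*i+1) = 2*(h-i)" using N that by simp
      then show ?thesis using fsym[of "2*i+1"] N that by simp
    qed
    then show ?thesis by (simp add: sum.distrib)
  qed
  also have "(\<Sum>i<Suc h. ?f (2*(h-i))) = (\<Sum>i<Suc h. ?f (2*i))"
    using sum.nat_diff_reindex[of "\<lambda>i. ?f (2*i)" "Suc h"] by simp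
  also have "(\<Sum>i<Suc h. ?f (2*i)) = OmegaPlus r s t"
    unfolding OmegaPlus_def vsum_def vscale_def h_def[symmetric] eta'_def
    by (simp add: atLeast0AtMost lessThan_Suc_atMost)
  finally show "Omega r s t = vscale 2 (OmegaPlus r s) t" unfolding vscale_def by simp
qed

end


theorem mainTheorem6:
  fixes r s :: nat
  assumes "r \<ge> 3" "odd r" "odd s" "coprime r s" "0 < s" "s < r"
  shows "Omega r s = vscale (-1) (vmult r s (peval r s (pderiv (Ppoly r s (r - 1))) (basis 1))
                                           (peval r s (Ppoly r s (r - 2)) (basis 1)))
     \<and> Omega r s = vscale (-1) (vmult r s (basis (r - 2)) (peval r s (pderiv (Ppoly r s (r - 1))) (basis 1)))
     \<and> Omega r s = vscale 2 (OmegaPlus r s)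
     \<and> (\<forall>k. odd k \<longrightarrow> OmegaPlus r s k = 0)"
proof -
  interpret VQ r s using assms by unfold_locales auto
  show ?thesis using claim1 claim2 claim3 claim4 by blast
qed

end
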